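(* Let $g:(0,\infty)\to(0,\infty)$ be decreasing with $\lim_{t\to\infty}g(t)=0$ and $\sup_{t>0}g(t)/g(2t)<\infty$, and assume $\lim_{t\to+\infty}g(t)/g(2t)=2$ (respectively, $\lim_{t\to0}g(t)/g(2t)=2$). For $x\in\ell_\infty(\mathbb Z)$ let $D_gx=\sum_{n\in\mathbb Z}x_ng(2^n)\chi_{[2^n,2^{n+1})}$ (a function on $(0,\infty)$), let $(D_gx)^*$ be its decreasing rearrangement, and set $$\Phi_g(D_gx)=\left\{\frac{1}{2^ng(2^n)}\int_{2^n}^{2^{n+1}}(D_gx)^*(s)\,ds\right\}_{n\in\mathbb Z}.$$ Then $\theta(x)=\theta(\Phi_g(D_gx))$ for every $0\le x\in\ell_\infty(\mathbb Z)$ and every continuous $S_+$-invariant linear functional $\theta$ on $\ell_\infty(\mathbb Z)$ supported at $+\infty$ (respectively, supported at $-\infty$).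
   Context: $\ell_\infty(\mathbb Z)$ is the space of bounded two-sided complex sequences with sup-norm; $(S_+x)_n=x_{n-1}$; $\theta$ is $S_+$-invariant if $\theta(S_+x)=\theta(x)$ for all $x$. $\theta$ is supported at $+\infty$ if $\theta(x\chi_{(-\infty,a)})=0$ for all $x\in\ell_\infty(\mathbb Z)$, $a\in\mathbb Z$, and supported at $-\infty$ if $\theta(x\chi_{(a,\infty)})=0$ for all $x$, $a$. The decreasing rearrangement of a measurable $h$ on $(0,\infty)$ is $h^*(t)=\inf\{s\ge0: m(\{|h|>s\})\le t\}$, $m$ Lebesgue measure. (Equivalently, $\Phi_g(D_gx)=\Phi_g(\mathcal D_gx)$ where $\mathcal D_gx$ is any $\tau$-measurable operator with $\mu(\mathcal D_gx)=(D_gx)^*$.) *)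

theory Defs
  imports "HOL-Analysis.Analysis"
begin

definition linf :: "(int \<Rightarrow> complex) set" where
  "linf = {x. bounded (range x)}"

definition supnorm :: "(int \<Rightarrow> complex) \<Rightarrow> real" where
  "supnorm x = (SUP n. norm (x n))"

text \<open>Continuous (w.r.t. the sup-norm) complex-linear functional on \<open>\<ell>\<^sub>\<infinity>(\<int>)\<close>;
  only its values on \<open>linf\<close> matter.\<close>
definition cont_lin_functional :: "((int \<Rightarrow> complex) \<Rightarrow> complex) \<Rightarrow> bool" where
  "cont_lin_functional \<theta> \<longleftrightarrow>
     (\<forall>x\<in>linf. \<forall>y\<in>linf. \<theta> (\<lambda>n. x n + y n) = \<theta> x + \<theta> y) \<and>
     (\<forall>c. \<forall>x\<in>linf. \<theta> (\<lambda>n. c * x n) = c * \<theta> x) \<and>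
     (\<forall>x\<in>linf. \<forall>e>0. \<exists>d>0. \<forall>y\<in>linf. supnorm (\<lambda>n. y n - x n) < d \<longrightarrow> norm (\<theta> y - \<theta> x) < e)"

definition shift_plus :: "(int \<Rightarrow> 'a) \<Rightarrow> int \<Rightarrow> 'a" where
  "shift_plus x = (\<lambda>n. x (n - 1))"

definition shift_invariant :: "((int \<Rightarrow> complex) \<Rightarrow> complex) \<Rightarrow> bool" where
  "shift_invariant \<theta> \<longleftrightarrow> (\<forall>x\<in>linf. \<theta> (shift_plus x) = \<theta> x)"

definition supported_pinf :: "((int \<Rightarrow> complex) \<Rightarrow> complex) \<Rightarrow> bool" where
  "supported_pinf \<theta> \<longleftrightarrow> (\<forall>x\<in>linf. \<forall>a::int. \<theta> (\<lambda>n. if n < a then x n else 0) = 0)"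

definition supported_minf :: "((int \<Rightarrow> complex) \<Rightarrow> complex) \<Rightarrow> bool" where
  "supported_minf \<theta> \<longleftrightarrow> (\<forall>x\<in>linf. \<forall>a::int. \<theta> (\<lambda>n. if a < n then x n else 0) = 0)"

text \<open>\<open>D\<^sub>g x = \<Sum>\<^sub>n x\<^sub>n g(2^n) \<chi>\<^bsub>[2^n,2^(n+1))\<^esub>\<close> as a function on \<open>(0,\<infinity>)\<close>
  (set to 0 outside \<open>(0,\<infinity>)\<close>); for \<open>t \<in> [2^n,2^(n+1))\<close> one has \<open>n = \<lfloor>log 2 t\<rfloor>\<close>.\<close>
definition Dg :: "(real \<Rightarrow> real) \<Rightarrow> (int \<Rightarrow> real) \<Rightarrow> real \<Rightarrow> real" where
  "Dg g x t = (if 0 < t then x \<lfloor>log 2 t\<rfloor> * g (2 powr of_int \<lfloor>log 2 t\<rfloor>) else 0)"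

definition drearr :: "(real \<Rightarrow> real) \<Rightarrow> real \<Rightarrow> real" where
  "drearr h t = Inf {s. 0 \<le> s \<and> emeasure lborel {u \<in> {0<..}. s < \<bar>h u\<bar>} \<le> ennreal t}"

definition Phi_g :: "(real \<Rightarrow> real) \<Rightarrow> (real \<Rightarrow> real) \<Rightarrow> int \<Rightarrow> real" where
  "Phi_g g f n = (1 / (2 powr of_int n * g (2 powr of_int n))) *
      integral {2 powr of_int n .. 2 powr of_int (n + 1)} (drearr f)"

end

theory Submission
  imports Defs
begin

lemma floor_log_eq:
  fixes u :: real
  assumes "2 powr of_int k \<le> u" "u < 2 powr of_int (k+1)"
  shows "\<lfloor>log 2 u\<rfloor> = k"
proof -
  have u: "0 < u" using assms(1) by (smt (verit) powr_gt_zero)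
  have "of_int k \<le> log 2 u" using assms(1) u by (simp add: le_log_iff)
  moreover have "log 2 u < of_int k + 1" using assms(2) u by (simp add: log_less_iff)
  ultimately show ?thesis by (simp add: floor_eq_iff)
qed

lemma pow_floor_log:
  fixes u :: real
  assumes "0 < u"
  shows "2 powr of_int \<lfloor>log 2 u\<rfloor> \<le> u" "u < 2 powr of_int (\<lfloor>log 2 u\<rfloor> + 1)"
proof -
  have "2 powr of_int \<lfloor>log 2 u\<rfloor> \<le> 2 powr (log 2 u)" by (rule powr_mono) auto
  then show "2 powr of_int \<lfloor>log 2 u\<rfloor> \<le> u" using assms by simp
  have "log 2 u < of_int \<lfloor>log 2 u\<rfloor> + 1" by linarith
  then have "2 powr (log 2 u) < 2 powr (of_int \<lfloor>log 2 u\<rfloor> + 1)" by (intro powr_less_mono) auto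
  then show "u < 2 powr of_int (\<lfloor>log 2 u\<rfloor> + 1)" using assms by simp
qed

lemma floor_log_less_iff:
  fixes u :: real assumes "0 < u"
  shows "\<lfloor>log 2 u\<rfloor> < m \<longleftrightarrow> u < 2 powr of_int m"
  using assms by (simp add: floor_less_iff log_less_iff)

lemma floor_log_ge_iff:
  fixes u :: real assumes "0 < u"
  shows "m \<le> \<lfloor>log 2 u\<rfloor> \<longleftrightarrow> 2 powr of_int m \<le> u"
  using floor_log_less_iff[OF assms, of m] by linarith

definition blk :: "(int \<Rightarrow> bool) \<Rightarrow> real set" where
  "blk P = {u. 0 < u \<and> P \<lfloor>log 2 u\<rfloor>}"

lemma blk_single: "blk (\<lambda>k. k = n) = {2 powr of_int n..<2 powr of_int (n+1)}"
proof -
  have "u \<in> blk (\<lambda>k. k = n) \<longleftrightarrow> u \<in> {2 powr of_int n..<2 powr of_int (n+1)}" for u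
  proof
    assume "u \<in> blk (\<lambda>k. k = n)"
    then have "0 < u" "\<lfloor>log 2 u\<rfloor> = n" by (auto simp: blk_def)
    then show "u \<in> {2 powr of_int n..<2 powr of_int (n+1)}"
      using pow_floor_log[of u] by auto
  next
    assume "u \<in> {2 powr of_int n..<2 powr of_int (n+1)}"
    moreover have "0 < (2::real) powr of_int n" by simp
    ultimately have "0 < u" by (meson atLeastLessThan_iff less_le_trans)
    with \<open>u \<in> {2 powr of_int n..<2 powr of_int (n+1)}\<close> show "u \<in> blk (\<lambda>k. k = n)"
      using floor_log_eq[of n u] by (auto simp: blk_def)
  qed
  then show ?thesis by blast
qed

lemma blk_sets: "blk P \<in> sets lborel"
proof -
  have "blk P = (\<Union>k\<in>{k. P k}. blk (\<lambda>j. j = k))" by (auto simp: blk_def)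
  also have "\<dots> \<in> sets lborel"
    by (intro sets.countable_UN'') (auto simp: blk_single)
  finally show ?thesis .
qed

lemma blk_less: "blk (\<lambda>k. k < m) = {0<..<2 powr of_int m}"
  using floor_log_less_iff by (auto simp: blk_def)

lemma blk_ge: "blk (\<lambda>k. m \<le> k) = {2 powr of_int m..}"
proof -
  have "u \<in> blk (\<lambda>k. m \<le> k) \<longleftrightarrow> 2 powr of_int m \<le> u" for u
  proof
    assume "u \<in> blk (\<lambda>k. m \<le> k)" then show "2 powr of_int m \<le> u"
      by (auto simp: blk_def floor_log_ge_iff)
  next
    assume a: "2 powr of_int m \<le> u"
    have "0 < (2::real) powr of_int m" by simp
    with a have "0 < u" by linarith
    with a show "u \<in> blk (\<lambda>k. m \<le> k)" by (auto simp: blk_def floor_log_ge_iff)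
  qed
  then show ?thesis by auto
qed

lemma emeasure_blk_single:
  "emeasure lborel (blk (\<lambda>k. k = n \<and> Q k)) = (if Q n then ennreal (2 powr of_int n) else 0)"
proof (cases "Q n")
  case True
  then have "blk (\<lambda>k. k = n \<and> Q k) = blk (\<lambda>k. k = n)" by (auto simp: blk_def)
  then have "blk (\<lambda>k. k = n \<and> Q k) = {2 powr of_int n..<2 powr of_int (n+1)}"
    using blk_single[of n] by simp
  moreover have "(2::real) powr of_int (n+1) - 2 powr of_int n = 2 powr of_int n"
    by (simp add: powr_add)
  ultimately show ?thesis using True by simp
next
  case False
  then have "blk (\<lambda>k. k = n \<and> Q k) = {}" by (auto simp: blk_def)
  then show ?thesis using False by simp
qed

lemma layer_cake:
  fixes \<phi> :: "real \<Rightarrow> real"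
  assumes phim[measurable]: "\<phi> \<in> borel_measurable borel" and nn: "\<And>t. 0 \<le> \<phi> t"
    and A[measurable]: "A \<in> sets borel"
  shows "(\<integral>\<^sup>+t. indicator A t * ennreal (\<phi> t) \<partial>lborel)
       = (\<integral>\<^sup>+s. indicator {0<..} s * emeasure lborel {t\<in>A. s < \<phi> t} \<partial>lborel)"
proof -
  have "(\<integral>\<^sup>+t. indicator A t * ennreal (\<phi> t) \<partial>lborel)
      = (\<integral>\<^sup>+t. \<integral>\<^sup>+s. indicator {(t,s). t \<in> A \<and> 0 < s \<and> s < \<phi> t} (t,s) \<partial>lborel \<partial>lborel)"
  proof (rule nn_integral_cong)
    fix t
    have "(\<integral>\<^sup>+s. indicator {(t,s). t \<in> A \<and> 0 < s \<and> s < \<phi> t} (t,s) \<partial>lborel)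
        = (\<integral>\<^sup>+s. indicator A t * indicator {0<..<\<phi> t} s \<partial>lborel)"
      by (intro nn_integral_cong) (auto simp: indicator_def)
    also have "\<dots> = indicator A t * emeasure lborel {0<..<\<phi> t}"
      by (subst nn_integral_cmult) auto
    also have "\<dots> = indicator A t * ennreal (\<phi> t)" using nn[of t] by simp
    finally show "indicator A t * ennreal (\<phi> t) = (\<integral>\<^sup>+s. indicator {(t,s). t \<in> A \<and> 0 < s \<and> s < \<phi> t} (t,s) \<partial>lborel)" by simp
  qed
  also have "\<dots> = (\<integral>\<^sup>+s. \<integral>\<^sup>+t. indicator {(t,s). t \<in> A \<and> 0 < s \<and> s < \<phi> t} (t,s) \<partial>lborel \<partial>lborel)"
  proof -
    have "Measurable.pred (borel \<Otimes>\<^sub>M borel) (\<lambda>p::real\<times>real. fst p \<in> A \<and> 0 < snd p \<and> snd p < \<phi> (fst p))"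
      by measurable
    then have "{p \<in> space (borel \<Otimes>\<^sub>M borel). fst p \<in> A \<and> 0 < snd p \<and> snd p < \<phi> (fst p)} \<in> sets (borel \<Otimes>\<^sub>M borel)"
      by (simp add: pred_def)
    moreover have "{p \<in> space (borel \<Otimes>\<^sub>M borel). fst p \<in> A \<and> 0 < snd p \<and> snd p < \<phi> (fst p)} = {(t,s). t \<in> A \<and> 0 < s \<and> s < \<phi> t}"
      by (auto simp: space_pair_measure)
    ultimately have "{(t,s). t \<in> A \<and> 0 < s \<and> s < \<phi> t} \<in> sets (lborel \<Otimes>\<^sub>M lborel)"
      by (simp cong: measurable_cong_sets)
    then have meas: "case_prod (\<lambda>t s. indicator {(t,s). t \<in> A \<and> 0 < s \<and> s < \<phi> t} (t,s) :: ennreal) \<in> borel_measurable (lborel \<Otimes>\<^sub>M lborel)"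
      by (simp add: case_prod_unfold)
    show ?thesis using lborel_pair.Fubini'[OF meas] by simp
  qed
  also have "\<dots> = (\<integral>\<^sup>+s. indicator {0<..} s * emeasure lborel {t\<in>A. s < \<phi> t} \<partial>lborel)"
  proof (rule nn_integral_cong)
    fix s
    have "(\<integral>\<^sup>+t. indicator {(t,s). t \<in> A \<and> 0 < s \<and> s < \<phi> t} (t,s) \<partial>lborel)
        = (\<integral>\<^sup>+t. indicator {0<..} s * indicator {t\<in>A. s < \<phi> t} t \<partial>lborel)"
      by (intro nn_integral_cong) (auto simp: indicator_def)
    also have "\<dots> = indicator {0<..} s * emeasure lborel {t\<in>A. s < \<phi> t}"
      by (subst nn_integral_cmult) auto
    finally show "(\<integral>\<^sup>+t. indicator {(t,s). t \<in> A \<and> 0 < s \<and> s < \<phi> t} (t,s) \<partial>lborel)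
        = indicator {0<..} s * emeasure lborel {t\<in>A. s < \<phi> t}" .
  qed
  finally show ?thesis .
qed


locale PG =
  fixes g :: "real \<Rightarrow> real" and x :: "int \<Rightarrow> real" and M :: real
  assumes gpos: "\<And>t. 0 < t \<Longrightarrow> 0 < g t"
    and gdec: "\<And>s t. 0 < s \<Longrightarrow> s \<le> t \<Longrightarrow> g t \<le> g s"
    and glim: "(g \<longlongrightarrow> 0) at_top"
    and xnn: "\<And>n. 0 \<le> x n" and xM: "\<And>n. x n \<le> M"
begin

definition "f = Dg g x"
definition v :: "int \<Rightarrow> real" where "v k = x k * g (2 powr of_int k)"
definition mu :: "real \<Rightarrow> ennreal" where "mu s = emeasure lborel {u \<in> {0<..}. s < \<bar>f u\<bar>}"
definition "F = drearr f"

lemma M_nn: "0 \<le> M" using xnn[of 0] xM[of 0] by linarith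

lemma v_nn: "0 \<le> v k"
  unfolding v_def using xnn[of k] gpos[of "2 powr of_int k"] by simp

lemma v_le: "v k \<le> M * g (2 powr of_int k)"
  unfolding v_def using xM[of k] gpos[of "2 powr of_int k"] by (simp add: mult_right_mono)

lemma v_small: "n \<le> k \<Longrightarrow> v k \<le> M * g (2 powr of_int n)"
proof -
  assume "n \<le> k"
  then have "g (2 powr of_int k) \<le> g (2 powr of_int n)" by (intro gdec) auto
  then have "M * g (2 powr of_int k) \<le> M * g (2 powr of_int n)" using M_nn by (rule mult_left_mono)
  then show ?thesis using v_le[of k] by linarith
qed

lemma f_pos: "0 < u \<Longrightarrow> f u = v \<lfloor>log 2 u\<rfloor>"
  by (simp add: f_def Dg_def v_def)

lemma f_nn: "0 \<le> f u"
proof (cases "0 < u")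
  case True then show ?thesis using v_nn by (simp add: f_pos)
next
  case False then show ?thesis by (simp add: f_def Dg_def)
qed

lemma level: "{u \<in> {0<..}. s < \<bar>f u\<bar>} = blk (\<lambda>k. s < v k)"
proof -
  have "u \<in> {u \<in> {0<..}. s < \<bar>f u\<bar>} \<longleftrightarrow> u \<in> blk (\<lambda>k. s < v k)" for u
  proof (cases "0 < u")
    case True
    then have "\<bar>f u\<bar> = v \<lfloor>log 2 u\<rfloor>" using f_nn[of u] f_pos[OF True] by simp
    then show ?thesis using True by (simp add: blk_def)
  next
    case False then show ?thesis by (simp add: blk_def)
  qed
  then show ?thesis by blast
qed

lemma mu_eq: "mu s = emeasure lborel (blk (\<lambda>k. s < v k))"
  unfolding mu_def level by (rule refl)

lemma mu_antimono: "s \<le> s' \<Longrightarrow> mu s' \<le> mu s"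
  unfolding mu_eq by (intro emeasure_mono blk_sets) (auto simp: blk_def)

lemma mu_le: "M * g (2 powr of_int m) \<le> s \<Longrightarrow> mu s \<le> ennreal (2 powr of_int m)"
proof -
  assume a: "M * g (2 powr of_int m) \<le> s"
  have "blk (\<lambda>k. s < v k) \<subseteq> blk (\<lambda>k. k < m)"
  proof
    fix u assume "u \<in> blk (\<lambda>k. s < v k)"
    then have "0 < u" "s < v \<lfloor>log 2 u\<rfloor>" by (auto simp: blk_def)
    moreover have "\<not> m \<le> \<lfloor>log 2 u\<rfloor>" using v_small[of m "\<lfloor>log 2 u\<rfloor>"] a calculation by linarith
    ultimately show "u \<in> blk (\<lambda>k. k < m)" by (auto simp: blk_def)
  qed
  then have "mu s \<le> emeasure lborel (blk (\<lambda>k. k < m))"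
    unfolding mu_eq by (intro emeasure_mono blk_sets)
  also have "\<dots> = ennreal (2 powr of_int m)" by (simp add: blk_less)
  finally show ?thesis .
qed

lemma exists_small: "0 < s \<Longrightarrow> \<exists>m::int. M * g (2 powr of_int m) \<le> s"
proof -
  assume s: "0 < s"
  have "((\<lambda>t. M * g t) \<longlongrightarrow> M * 0) at_top" by (intro tendsto_mult glim tendsto_const)
  then have "((\<lambda>t. M * g t) \<longlongrightarrow> 0) at_top" by simp
  from order_tendstoD(2)[OF this s] have "eventually (\<lambda>t. M * g t < s) at_top" .
  then obtain N where N: "\<And>t. t \<ge> N \<Longrightarrow> M * g t < s" unfolding eventually_at_top_linorder by blast
  define m where "m = \<lceil>log 2 (max 1 N)\<rceil>"
  have "max 1 N = 2 powr (log 2 (max 1 N))" by (rule powr_log_cancel[symmetric]) auto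
  also have "\<dots> \<le> 2 powr of_int m" unfolding m_def by (intro powr_mono) auto
  finally have "N \<le> 2 powr of_int m" by linarith
  then have "M * g (2 powr of_int m) < s" using N by blast
  then show ?thesis by (intro exI[of _ m]) linarith
qed

lemma mu_fin: "0 < s \<Longrightarrow> mu s < top"
proof -
  assume "0 < s"
  then obtain m where "M * g (2 powr of_int m) \<le> s" using exists_small by blast
  then have "mu s \<le> ennreal (2 powr of_int m)" by (rule mu_le)
  then show ?thesis using ennreal_less_top[of "2 powr of_int m"] by (rule le_less_trans)
qed

lemma mu_rcont:
  assumes "ennreal t < mu s"
  shows "\<exists>d>0. ennreal t < mu (s + d)"
proof -
  define A where "A n = blk (\<lambda>k. s + 1 / Suc n < v k)" for n :: nat
  have inc: "incseq A"
  proof (rule incseq_SucI)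
    fix n
    have "s + 1 / Suc (Suc n) \<le> s + 1 / Suc n" by (simp add: frac_le)
    then show "A n \<subseteq> A (Suc n)" unfolding A_def blk_def by auto
  qed
  have un: "(\<Union>n. A n) = blk (\<lambda>k. s < v k)"
  proof
    show "(\<Union>n. A n) \<subseteq> blk (\<lambda>k. s < v k)"
    proof
      fix u assume "u \<in> (\<Union>n. A n)"
      then obtain n where "u \<in> A n" by blast
      then have u0: "0 < u" and "s + 1 / real (Suc n) < v \<lfloor>log 2 u\<rfloor>" by (auto simp: A_def blk_def)
      moreover have "0 < 1 / real (Suc n)" by simp
      ultimately have "s < v \<lfloor>log 2 u\<rfloor>" by linarith
      with u0 show "u \<in> blk (\<lambda>k. s < v k)" by (simp add: blk_def)
    qed
  next
    show "blk (\<lambda>k. s < v k) \<subseteq> (\<Union>n. A n)"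
    proof
      fix u assume "u \<in> blk (\<lambda>k. s < v k)"
      then have u: "0 < u" "s < v \<lfloor>log 2 u\<rfloor>" by (auto simp: blk_def)
      then obtain n :: nat where "1 / Suc n < v \<lfloor>log 2 u\<rfloor> - s"
        by (metis diff_gt_0_iff_gt nat_approx_posE)
      then have "s + 1 / Suc n < v \<lfloor>log 2 u\<rfloor>" by simp
      then show "u \<in> (\<Union>n. A n)" using u unfolding A_def blk_def by auto
    qed
  qed
  have "(SUP n. emeasure lborel (A n)) = emeasure lborel (\<Union>n. A n)"
    using blk_sets unfolding A_def[symmetric] by (intro SUP_emeasure_incseq inc) (auto simp: A_def)
  then have "(SUP n. emeasure lborel (A n)) = mu s" by (simp add: un mu_eq)
  with assms obtain n where "ennreal t < emeasure lborel (A n)"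
    by (metis less_SUP_iff)
  then have "ennreal t < mu (s + 1 / Suc n)" by (simp add: A_def mu_eq)
  then show ?thesis by (intro exI[of _ "1 / Suc n"]) auto
qed

lemma F_set_ne: "0 < t \<Longrightarrow> \<exists>s. 0 \<le> s \<and> mu s \<le> ennreal t"
proof -
  assume t: "0 < t"
  define m where "m = \<lfloor>log 2 t\<rfloor>"
  have "2 powr of_int m \<le> t" unfolding m_def using pow_floor_log[OF t] by simp
  moreover have "0 \<le> M * g (2 powr of_int m)" using M_nn gpos[of "2 powr of_int m"] by simp
  moreover have "mu (M * g (2 powr of_int m)) \<le> ennreal (2 powr of_int m)" by (rule mu_le) simp
  moreover have "ennreal (2 powr of_int m) \<le> ennreal t" using calculation(1) by (rule ennreal_leI)
  ultimately show ?thesis by (intro exI[of _ "M * g (2 powr of_int m)"]) (auto intro: order_trans)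
qed

lemma F_def': "F t = Inf {s. 0 \<le> s \<and> mu s \<le> ennreal t}"
  by (simp add: F_def drearr_def mu_def)

lemma F_char:
  assumes t: "0 < t" and s: "0 \<le> s"
  shows "s < F t \<longleftrightarrow> ennreal t < mu s"
proof
  assume a: "s < F t"
  show "ennreal t < mu s"
  proof (rule ccontr)
    assume "\<not> ennreal t < mu s"
    then have "s \<in> {s. 0 \<le> s \<and> mu s \<le> ennreal t}" using s by auto
    then have "F t \<le> s" unfolding F_def' by (intro cInf_lower) (auto intro: bdd_belowI[of _ 0])
    with a show False by simp
  qed
next
  assume a: "ennreal t < mu s"
  then obtain d where d: "d > 0" "ennreal t < mu (s + d)" using mu_rcont by blast
  have "s + d \<le> F t" unfolding F_def'
  proof (rule cInf_greatest)
    show "{s. 0 \<le> s \<and> mu s \<le> ennreal t} \<noteq> {}" using F_set_ne[OF t] by auto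
  next
    fix s' assume "s' \<in> {s. 0 \<le> s \<and> mu s \<le> ennreal t}"
    then have "mu s' \<le> ennreal t" by auto
    show "s + d \<le> s'"
    proof (rule ccontr)
      assume "\<not> s + d \<le> s'"
      then have "mu (s + d) \<le> mu s'" by (intro mu_antimono) simp
      with d(2) \<open>mu s' \<le> ennreal t\<close> show False by simp
    qed
  qed
  with d(1) show "s < F t" by simp
qed

lemma F_nn: "0 < t \<Longrightarrow> 0 \<le> F t"
  unfolding F_def' using F_set_ne by (intro cInf_greatest) auto

lemma F_antimono:
  assumes "0 < t" "t \<le> t'" shows "F t' \<le> F t"
  unfolding F_def'
proof (rule cInf_superset_mono)
  show "{s. 0 \<le> s \<and> mu s \<le> ennreal t} \<noteq> {}" using F_set_ne[OF assms(1)] by blast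
  show "bdd_below {s. 0 \<le> s \<and> mu s \<le> ennreal t'}" by (rule bdd_belowI[of _ 0]) simp
  have "ennreal t \<le> ennreal t'" using assms(2) by (rule ennreal_leI)
  then show "{s. 0 \<le> s \<and> mu s \<le> ennreal t} \<subseteq> {s. 0 \<le> s \<and> mu s \<le> ennreal t'}"
    by (auto intro: order_trans)
qed

definition mb :: "real \<Rightarrow> real \<Rightarrow> real" where "mb B s = enn2real (min (mu s) (ennreal B))"
definition p :: "int \<Rightarrow> real \<Rightarrow> real" where "p n s = measure lborel (blk (\<lambda>k. k \<le> n \<and> s < v k))"
definition c :: "int \<Rightarrow> real \<Rightarrow> real" where "c n s = (if s < v n then 2 powr of_int n else 0)"
definition e :: "int \<Rightarrow> real \<Rightarrow> real" where "e n s = mb (2 powr of_int (n+1)) s - p n s"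
definition P :: "int \<Rightarrow> real \<Rightarrow> real" where "P n s = mb (2 powr of_int (n+1)) s - mb (2 powr of_int n) s"

lemma blk_le_sub: "blk (\<lambda>k. k \<le> n \<and> Q k) \<subseteq> {0<..<2 powr of_int (n+1)}"
  using blk_less[of "n+1"] by (auto simp: blk_def)

lemma emeasure_p: "emeasure lborel (blk (\<lambda>k. k \<le> n \<and> s < v k)) = ennreal (p n s)"
proof -
  have "emeasure lborel (blk (\<lambda>k. k \<le> n \<and> s < v k)) \<le> emeasure lborel {0<..<(2::real) powr of_int (n+1)}"
    by (intro emeasure_mono blk_le_sub) simp
  also have "\<dots> < top" by simp
  finally show ?thesis unfolding p_def by (intro emeasure_eq_ennreal_measure) simp
qed

lemma p_nn: "0 \<le> p n s" by (simp add: p_def)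

lemma p_le: "p n s \<le> 2 powr of_int (n+1)"
proof -
  have "ennreal (p n s) \<le> emeasure lborel {0<..<(2::real) powr of_int (n+1)}"
    unfolding emeasure_p[symmetric] by (intro emeasure_mono blk_le_sub) simp
  then show ?thesis by simp
qed

lemma p_le_mu: "ennreal (p n s) \<le> mu s"
  unfolding emeasure_p[symmetric] mu_eq by (intro emeasure_mono blk_sets) (auto simp: blk_def)

lemma p_step: "p n s = p (n - 1) s + c n s"
proof -
  have un: "blk (\<lambda>k. k \<le> n \<and> s < v k) = blk (\<lambda>k. k \<le> n - 1 \<and> s < v k) \<union> blk (\<lambda>k. k = n \<and> s < v k)"
    by (auto simp: blk_def)
  have "p n s = measure lborel (blk (\<lambda>k. k \<le> n - 1 \<and> s < v k)) + measure lborel (blk (\<lambda>k. k = n \<and> s < v k))"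
    unfolding p_def un
  proof (rule measure_Union)
    show "emeasure lborel (blk (\<lambda>k. k \<le> n - 1 \<and> s < v k)) \<noteq> \<infinity>" unfolding emeasure_p by simp
    show "emeasure lborel (blk (\<lambda>k. k = n \<and> s < v k)) \<noteq> \<infinity>" by (simp add: emeasure_blk_single)
  qed (auto simp: blk_def blk_sets)
  also have "measure lborel (blk (\<lambda>k. k = n \<and> s < v k)) = c n s"
    unfolding measure_def emeasure_blk_single c_def by simp
  finally show ?thesis by (simp add: p_def)
qed

lemma mb_nn: "0 \<le> mb B s" by (simp add: mb_def)

lemma mb_le: "0 \<le> B \<Longrightarrow> mb B s \<le> B"
proof -
  assume B: "0 \<le> B"
  have "enn2real (min (mu s) (ennreal B)) \<le> enn2real (ennreal B)" by (intro enn2real_mono) auto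
  then show ?thesis using B by (simp add: mb_def)
qed

lemma mb_mono: "0 \<le> B \<Longrightarrow> B \<le> B' \<Longrightarrow> mb B s \<le> mb B' s"
proof -
  assume "0 \<le> B" "B \<le> B'"
  then have "min (mu s) (ennreal B) \<le> min (mu s) (ennreal B')" by (intro min.mono ennreal_leI) auto
  then show ?thesis unfolding mb_def by (intro enn2real_mono) (auto simp: min_less_iff_disj)
qed

lemma mb_antimono: "s \<le> s' \<Longrightarrow> mb B s' \<le> mb B s"
  unfolding mb_def by (intro enn2real_mono min.mono mu_antimono) (auto simp: min_less_iff_disj)

lemma p_antimono: "s \<le> s' \<Longrightarrow> p n s' \<le> p n s"
proof -
  assume "s \<le> s'"
  then have "ennreal (p n s') \<le> ennreal (p n s)"
    unfolding emeasure_p[symmetric] by (intro emeasure_mono blk_sets) (auto simp: blk_def)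
  then show ?thesis using p_nn by simp
qed

lemma e_nn: "0 \<le> e n s"
proof -
  have "ennreal (p n s) \<le> min (mu s) (ennreal (2 powr of_int (n+1)))"
    using p_le_mu p_le by (auto intro: ennreal_leI)
  then have "enn2real (ennreal (p n s)) \<le> mb (2 powr of_int (n+1)) s"
    unfolding mb_def by (intro enn2real_mono) (auto simp: min_less_iff_disj)
  then show ?thesis using p_nn by (simp add: e_def)
qed

lemma e_le: "e n s \<le> 2 powr of_int (n+1)"
  using mb_le[of "2 powr of_int (n+1)" s] p_nn[of n s] by (simp add: e_def)

lemma e_zero:
  assumes "M * g (2 powr of_int (n+1)) \<le> s"
  shows "e n s = 0"
proof -
  have "blk (\<lambda>k. s < v k) = blk (\<lambda>k. k \<le> n \<and> s < v k)"
  proof -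
    have "s < v k \<Longrightarrow> k \<le> n" for k
      using v_small[of "n+1" k] assms by (cases "n + 1 \<le> k") auto
    then show ?thesis by (auto simp: blk_def)
  qed
  then have "mu s = ennreal (p n s)" by (simp add: mu_eq emeasure_p)
  then have "mb (2 powr of_int (n+1)) s = p n s" unfolding mb_def using p_le[of n s] p_nn[of n s]
    by (simp add: min_def)
  then show ?thesis by (simp add: e_def)
qed

lemma c_nn: "0 \<le> c n s" by (simp add: c_def)

lemma P_e_step: "P n s + e (n - 1) s = c n s + e n s"
  using p_step[of n s] by (simp add: P_def e_def)

lemma P_nn: "0 \<le> P n s"
  unfolding P_def using mb_mono[of "2 powr of_int n" "2 powr of_int (n+1)" s] by simp

lemma emeasure_F_level:
  assumes s: "0 < s"
  shows "emeasure lborel {t \<in> {2 powr of_int n..2 powr of_int (n+1)}. s < F t} = ennreal (P n s)"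
proof -
  define a where "a = (2::real) powr of_int n"
  define b where "b = (2::real) powr of_int (n+1)"
  have a0: "0 < a" and ab: "a \<le> b" by (auto simp: a_def b_def)
  obtain m where m: "mu s = ennreal m" "0 \<le> m"
    using mu_fin[OF s] by (cases "mu s") (auto simp: top_ennreal_def)
  have mbm: "mb B s = min m B" if "0 \<le> B" for B
    using that m by (simp add: mb_def min_def ennreal_le_iff)
  have "{t \<in> {a..b}. s < F t} = {t \<in> {a..b}. t < m}"
  proof -
    have "t \<in> {a..b} \<Longrightarrow> s < F t \<longleftrightarrow> t < m" for t
      using F_char[of t s] s a0 m by (auto simp: ennreal_less_iff)
    then show ?thesis by auto
  qed
  also have "emeasure lborel \<dots> = ennreal (min m b - min m a)"
  proof (cases "m \<le> a")
    case True then have eq: "{t \<in> {a..b}. t < m} = {}" by auto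
    show ?thesis using ab True by (simp only: eq) (simp add: min_def)
  next
    case False
    show ?thesis
    proof (cases "m \<le> b")
      case True then have eq: "{t \<in> {a..b}. t < m} = {a..<m}" using False by auto
      show ?thesis using True False ab by (simp only: eq) (simp add: min_def)
    next
      case False2: False
      then have eq: "{t \<in> {a..b}. t < m} = {a..b}" by auto
      show ?thesis using False2 False ab by (simp only: eq) (simp add: min_def)
    qed
  qed
  also have "min m b - min m a = P n s"
    unfolding P_def using mbm[of a] mbm[of b] by (simp add: a_def b_def)
  finally show ?thesis by (simp add: a_def b_def)
qed

lemma antimono_meas:
  fixes h :: "real \<Rightarrow> real"
  assumes "\<And>s s'. s \<le> s' \<Longrightarrow> h s' \<le> h s"
  shows "h \<in> borel_measurable borel"
proof -
  have "mono (\<lambda>s. - h s)" using assms by (auto simp: mono_def)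
  then have "(\<lambda>s. - h s) \<in> borel_measurable borel" by (rule borel_measurable_mono)
  then have "(\<lambda>s. - (- h s)) \<in> borel_measurable borel" by (rule borel_measurable_uminus)
  then show ?thesis by simp
qed

lemma mb_meas[measurable]: "mb B \<in> borel_measurable borel"
  by (rule antimono_meas) (rule mb_antimono)

lemma p_meas[measurable]: "p n \<in> borel_measurable borel"
  by (rule antimono_meas) (rule p_antimono)

lemma c_meas[measurable]: "c n \<in> borel_measurable borel"
  unfolding c_def by measurable

lemma e_meas[measurable]: "e n \<in> borel_measurable borel"
  unfolding e_def by measurable

lemma P_meas[measurable]: "P n \<in> borel_measurable borel"
  unfolding P_def by measurable

lemma nn_int_add:
  fixes u w :: "real \<Rightarrow> real"
  assumes [measurable]: "u \<in> borel_measurable borel" "w \<in> borel_measurable borel"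
    and "\<And>s. 0 \<le> u s" "\<And>s. 0 \<le> w s"
  shows "(\<integral>\<^sup>+s. indicator {0<..} s * ennreal (u s + w s) \<partial>lborel)
       = (\<integral>\<^sup>+s. indicator {0<..} s * ennreal (u s) \<partial>lborel) + (\<integral>\<^sup>+s. indicator {0<..} s * ennreal (w s) \<partial>lborel)"
proof -
  have "(\<integral>\<^sup>+s. indicator {0<..} s * ennreal (u s + w s) \<partial>lborel)
      = (\<integral>\<^sup>+s. indicator {0<..} s * ennreal (u s) + indicator {0<..} s * ennreal (w s) \<partial>lborel)"
    using assms(3,4) by (intro nn_integral_cong) (simp add: ennreal_plus distrib_left)
  also have "\<dots> = (\<integral>\<^sup>+s. indicator {0<..} s * ennreal (u s) \<partial>lborel) + (\<integral>\<^sup>+s. indicator {0<..} s * ennreal (w s) \<partial>lborel)"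
    by (intro nn_integral_add) auto
  finally show ?thesis .
qed

lemma F_integrable: "0 < a \<Longrightarrow> F integrable_on {a..b}"
proof -
  assume a0: "0 < a"
  have "mono_on {a..b} (\<lambda>t. - F t)" using a0 by (auto simp: mono_on_def intro!: F_antimono)
  then have "(\<lambda>t. - F t) integrable_on {a..b}" by (rule integrable_on_mono_on)
  then have "(\<lambda>t. - (- F t)) integrable_on {a..b}" by (rule integrable_neg)
  then show ?thesis by simp
qed

lemma F_int:
  "(\<integral>\<^sup>+s. indicator {0<..} s * ennreal (P n s) \<partial>lborel)
     = ennreal (integral {2 powr of_int n..2 powr of_int (n+1)} F)"
proof -
  define a where "a = (2::real) powr of_int n"
  define b where "b = (2::real) powr of_int (n+1)"
  have a0: "0 < a" by (simp add: a_def)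
  define \<phi> where "\<phi> t = F (max a t)" for t
  have phi_meas: "\<phi> \<in> borel_measurable borel"
  proof (rule antimono_meas)
    fix s s' :: real assume "s \<le> s'"
    show "\<phi> s' \<le> \<phi> s" unfolding \<phi>_def by (rule F_antimono) (use a0 \<open>s \<le> s'\<close> in auto)
  qed
  have phi_nn: "0 \<le> \<phi> t" for t using F_nn[of "max a t"] a0 by (simp add: \<phi>_def)
  have lc: "(\<integral>\<^sup>+t. indicator {a..b} t * ennreal (\<phi> t) \<partial>lborel)
       = (\<integral>\<^sup>+s. indicator {0<..} s * emeasure lborel {t\<in>{a..b}. s < \<phi> t} \<partial>lborel)"
    by (rule layer_cake[OF phi_meas phi_nn]) simp
  have cong1: "(\<integral>\<^sup>+s. indicator {0<..} s * emeasure lborel {t\<in>{a..b}. s < \<phi> t} \<partial>lborel)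
      = (\<integral>\<^sup>+s. indicator {0<..} s * ennreal (P n s) \<partial>lborel)"
  proof (rule nn_integral_cong)
    fix s
    show "indicator {0<..} s * emeasure lborel {t\<in>{a..b}. s < \<phi> t} = indicator {0<..} s * ennreal (P n s)"
    proof (cases "0 < s")
      case True
      have "{t\<in>{a..b}. s < \<phi> t} = {t\<in>{a..b}. s < F t}" by (auto simp: \<phi>_def max_def)
      then show ?thesis using emeasure_F_level[OF True, of n] True by (simp add: a_def b_def)
    qed simp
  qed
  have "mono_on {a..b} (\<lambda>t. - F t)" using a0 by (auto simp: mono_on_def intro!: F_antimono)
  then have "(\<lambda>t. - F t) integrable_on {a..b}" by (rule integrable_on_mono_on)
  then have "(\<lambda>t. - (- F t)) integrable_on {a..b}" by (rule integrable_neg)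
  then have Fint: "(F has_integral integral {a..b} F) {a..b}" by (simp add: integrable_integral)
  have "(\<integral>\<^sup>+t. indicator {a..b} t * ennreal (\<phi> t) \<partial>lborel) = (\<integral>\<^sup>+t. ennreal (F t) * indicator {a..b} t \<partial>lborel)"
    by (intro nn_integral_cong) (auto simp: indicator_def \<phi>_def max_def)
  also have "\<dots> = ennreal (integral {a..b} F)"
    using a0 by (intro nn_integral_has_integral_lebesgue' Fint F_nn) auto
  finally have X: "(\<integral>\<^sup>+t. indicator {a..b} t * ennreal (\<phi> t) \<partial>lborel) = ennreal (integral {a..b} F)" .
  show ?thesis using lc cong1 X unfolding a_def b_def by metis
qed

lemma c_int:
  "(\<integral>\<^sup>+s. indicator {0<..} s * ennreal (c n s) \<partial>lborel) = ennreal (2 powr of_int n * v n)"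
proof -
  have "(\<integral>\<^sup>+s. indicator {0<..} s * ennreal (c n s) \<partial>lborel)
      = (\<integral>\<^sup>+s. ennreal (2 powr of_int n) * indicator {0<..<v n} s \<partial>lborel)"
    by (intro nn_integral_cong) (auto simp: c_def indicator_def)
  also have "\<dots> = ennreal (2 powr of_int n) * emeasure lborel {0<..<v n}"
    by (subst nn_integral_cmult) auto
  also have "\<dots> = ennreal (2 powr of_int n * v n)"
    using v_nn[of n] by (simp add: ennreal_mult)
  finally show ?thesis .
qed

definition h :: "int \<Rightarrow> real" where "h n = 2 powr of_int n * g (2 powr of_int n)"

lemma h_pos: "0 < h n" unfolding h_def using gpos[of "2 powr of_int n"] by simp

lemma e_int_le:
  "(\<integral>\<^sup>+s. indicator {0<..} s * ennreal (e n s) \<partial>lborel) \<le> ennreal (M * h (n+1))"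
proof -
  define V where "V = M * g (2 powr of_int (n+1))"
  define b where "b = (2::real) powr of_int (n+1)"
  have V0: "0 \<le> V" unfolding V_def using M_nn gpos[of "2 powr of_int (n+1)"] by simp
  have "(\<integral>\<^sup>+s. indicator {0<..} s * ennreal (e n s) \<partial>lborel)
      \<le> (\<integral>\<^sup>+s. ennreal b * indicator {0<..V} s \<partial>lborel)"
  proof (rule nn_integral_mono)
    fix s
    show "indicator {0<..} s * ennreal (e n s) \<le> ennreal b * indicator {0<..V} s"
    proof (cases "0 < s")
      case True
      show ?thesis
      proof (cases "s \<le> V")
        case True2: True
        then show ?thesis using True e_le[of n s] by (simp add: b_def ennreal_leI)
      next
        case False
        then have "e n s = 0" by (intro e_zero) (simp add: V_def)
        then show ?thesis by simp
      qed
    qed simp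
  qed
  also have "\<dots> = ennreal b * emeasure lborel {0<..V}"
    by (subst nn_integral_cmult) auto
  also have "\<dots> = ennreal (M * h (n+1))"
    using V0 by (simp add: ennreal_mult[symmetric] h_def V_def b_def mult_ac)
  finally show ?thesis .
qed

definition E :: "int \<Rightarrow> real" where
  "E n = enn2real (\<integral>\<^sup>+s. indicator {0<..} s * ennreal (e n s) \<partial>lborel)"

lemma E_eq: "(\<integral>\<^sup>+s. indicator {0<..} s * ennreal (e n s) \<partial>lborel) = ennreal (E n)"
proof -
  have "(\<integral>\<^sup>+s. indicator {0<..} s * ennreal (e n s) \<partial>lborel) < top"
    using e_int_le[of n] by (simp add: le_less_trans)
  then show ?thesis unfolding E_def by (simp add: less_top)
qed

lemma E_nn: "0 \<le> E n" by (simp add: E_def)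

lemma E_le: "E n \<le> M * h (n+1)"
  using e_int_le[of n] M_nn h_pos[of "n+1"] by (simp add: E_eq ennreal_le_iff)

lemma main_identity:
  "integral {2 powr of_int n..2 powr of_int (n+1)} F + E (n - 1) = 2 powr of_int n * v n + E n"
proof -
  have "(\<integral>\<^sup>+s. indicator {0<..} s * ennreal (P n s + e (n - 1) s) \<partial>lborel)
      = (\<integral>\<^sup>+s. indicator {0<..} s * ennreal (c n s + e n s) \<partial>lborel)"
    by (simp only: P_e_step)
  then have "ennreal (integral {2 powr of_int n..2 powr of_int (n+1)} F) + ennreal (E (n - 1))
      = ennreal (2 powr of_int n * v n) + ennreal (E n)"
    by (simp only: nn_int_add[OF P_meas e_meas P_nn e_nn] nn_int_add[OF c_meas e_meas c_nn e_nn] F_int c_int E_eq)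
  moreover have "0 \<le> integral {2 powr of_int n..2 powr of_int (n+1)} F"
  proof (rule integral_nonneg)
    show "F integrable_on {2 powr of_int n..2 powr of_int (n+1)}" by (rule F_integrable) simp
  next
    fix t :: real assume "t \<in> {2 powr of_int n..2 powr of_int (n+1)}"
    moreover have "0 < (2::real) powr of_int n" by simp
    ultimately have "0 < t" by (meson atLeastAtMost_iff less_le_trans)
    then show "0 \<le> F t" by (rule F_nn)
  qed
  ultimately show ?thesis using E_nn v_nn[of n]
    by (simp add: ennreal_plus[symmetric] del: ennreal_plus)
qed

definition w :: "int \<Rightarrow> real" where "w n = E n / h (n+1)"
definition r :: "int \<Rightarrow> real" where "r n = w n * (h (n+1) / h n - 1)"

lemma w_nn: "0 \<le> w n" unfolding w_def by (rule divide_nonneg_pos[OF E_nn h_pos])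

lemma w_le: "w n \<le> M"
  using E_le[of n] h_pos[of "n+1"] by (simp add: w_def divide_le_eq)

lemma h_ratio: "0 < h (n+1) / h n" "h (n+1) / h n \<le> 2"
proof -
  show "0 < h (n+1) / h n" using h_pos by simp
  have pw: "(2::real) powr of_int (n+1) = 2 * 2 powr of_int n" by (simp add: powr_add)
  have "g (2 powr of_int (n+1)) \<le> g (2 powr of_int n)" by (intro gdec) auto
  then have "h (n+1) \<le> 2 * h n" unfolding h_def pw
    using mult_left_mono[of "g (2 * 2 powr of_int n)" "g (2 powr of_int n)" "2 * 2 powr of_int n"]
    by (simp add: mult_ac)
  then show "h (n+1) / h n \<le> 2" using h_pos[of n] by (simp add: divide_le_eq)
qed

lemma r_bound: "\<bar>r n\<bar> \<le> M"
proof -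
  have "\<bar>h (n+1) / h n - 1\<bar> \<le> 1" using h_ratio[of n] by linarith
  then have "w n * \<bar>h (n+1) / h n - 1\<bar> \<le> w n * 1" using w_nn[of n] by (rule mult_left_mono)
  then have "\<bar>r n\<bar> \<le> w n * 1" unfolding r_def using w_nn[of n] by (simp add: abs_mult)
  then show ?thesis using w_le[of n] by simp
qed

lemma h_ratio_q: "h (n+1) / h n = 2 / (g (2 powr of_int n) / g (2 * 2 powr of_int n))"
proof -
  have pw: "(2::real) powr of_int (n+1) = 2 * 2 powr of_int n" by (simp add: powr_add)
  have "g (2 powr of_int n) > 0" "g (2 * 2 powr of_int n) > 0" using gpos by auto
  then show ?thesis unfolding h_def pw by (simp add: field_simps)
qed

lemma r_small:
  assumes q: "\<bar>g (2 powr of_int n) / g (2 * 2 powr of_int n) - 2\<bar> < d" and d: "0 < d" "d \<le> 1"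
  shows "\<bar>r n\<bar> \<le> M * d"
proof -
  define q where "q = g (2 powr of_int n) / g (2 * 2 powr of_int n)"
  have q1: "1 < q" using q d unfolding q_def by linarith
  have "\<bar>2 / q - 1\<bar> = \<bar>2 - q\<bar> / q" using q1 by (simp add: field_simps abs_div)
  also have "\<dots> \<le> \<bar>2 - q\<bar>"
  proof -
    have "\<bar>2 - q\<bar> * 1 \<le> \<bar>2 - q\<bar> * q" using q1 by (intro mult_left_mono) auto
    then show ?thesis using q1 by (simp add: divide_le_eq)
  qed
  also have "\<dots> \<le> d" using q unfolding q_def by linarith
  finally have "\<bar>h (n+1) / h n - 1\<bar> \<le> d" unfolding h_ratio_q q_def .
  then have "w n * \<bar>h (n+1) / h n - 1\<bar> \<le> w n * d" using w_nn[of n] by (rule mult_left_mono)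
  then have "\<bar>r n\<bar> \<le> w n * d" unfolding r_def using w_nn[of n] by (simp add: abs_mult)
  also have "\<dots> \<le> M * d" using w_le[of n] d by (simp add: mult_right_mono)
  finally show ?thesis .
qed

lemma eps_d:
  assumes "0 < (\<epsilon>::real)"
  obtains d where "0 < d" "d \<le> 1" "M * d \<le> \<epsilon>"
proof -
  define d where "d = min 1 (\<epsilon> / (M + 1))"
  have d1: "0 < d" using assms M_nn by (simp add: d_def)
  have d2: "d \<le> 1" by (simp add: d_def)
  have d3: "M * d \<le> M * (\<epsilon> / (M + 1))" using M_nn by (intro mult_left_mono) (auto simp: d_def)
  have d4: "M * (\<epsilon> / (M + 1)) \<le> \<epsilon>" using M_nn assms by (simp add: field_simps)
  show ?thesis by (rule that[of d]) (use d1 d2 d3 d4 in linarith)+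
qed

lemma r_lim_top:
  assumes lim: "((\<lambda>t. g t / g (2 * t)) \<longlongrightarrow> 2) at_top" and eps: "0 < \<epsilon>"
  shows "\<exists>a. \<forall>n\<ge>a. \<bar>r n\<bar> \<le> \<epsilon>"
proof -
  obtain d where d: "0 < d" "d \<le> 1" "M * d \<le> \<epsilon>" using eps_d[OF eps] by blast
  have "eventually (\<lambda>t. dist (g t / g (2 * t)) 2 < d) at_top" using tendstoD[OF lim d(1)] .
  then obtain T where T: "\<And>t. t \<ge> T \<Longrightarrow> \<bar>g t / g (2 * t) - 2\<bar> < d"
    unfolding eventually_at_top_linorder dist_real_def by blast
  define a where "a = \<lceil>log 2 (max 1 T)\<rceil>"
  have "\<bar>r n\<bar> \<le> \<epsilon>" if "n \<ge> a" for n
  proof -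
    have "max 1 T = 2 powr (log 2 (max 1 T))" by (rule powr_log_cancel[symmetric]) auto
    also have "\<dots> \<le> 2 powr of_int a" unfolding a_def by (intro powr_mono) auto
    also have "\<dots> \<le> (2::real) powr of_int n" using that by (intro powr_mono) auto
    finally have "T \<le> 2 powr of_int n" by linarith
    then have "\<bar>r n\<bar> \<le> M * d" using T d by (intro r_small) auto
    then show ?thesis using d by linarith
  qed
  then show ?thesis by blast
qed

lemma r_lim_zero:
  assumes lim: "((\<lambda>t. g t / g (2 * t)) \<longlongrightarrow> 2) (at_right 0)" and eps: "0 < \<epsilon>"
  shows "\<exists>a. \<forall>n\<le>a. \<bar>r n\<bar> \<le> \<epsilon>"
proof -
  obtain d where d: "0 < d" "d \<le> 1" "M * d \<le> \<epsilon>" using eps_d[OF eps] by blast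
  have "eventually (\<lambda>t. dist (g t / g (2 * t)) 2 < d) (at_right 0)" using tendstoD[OF lim d(1)] .
  then obtain b where b: "b > 0" "\<And>t. 0 < t \<Longrightarrow> t < b \<Longrightarrow> \<bar>g t / g (2 * t) - 2\<bar> < d"
    unfolding eventually_at_right[OF zero_less_one] dist_real_def by blast
  define a where "a = \<lfloor>log 2 b\<rfloor> - 1"
  have "\<bar>r n\<bar> \<le> \<epsilon>" if "n \<le> a" for n
  proof -
    have "(2::real) powr of_int n \<le> 2 powr of_int a" using that by (intro powr_mono) auto
    also have "\<dots> < 2 powr of_int \<lfloor>log 2 b\<rfloor>" unfolding a_def by (intro powr_less_mono) auto
    also have "\<dots> \<le> b" using pow_floor_log[OF b(1)] by simp
    finally have "2 powr of_int n < b" .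
    then have "\<bar>r n\<bar> \<le> M * d" using b d by (intro r_small) auto
    then show ?thesis using d by linarith
  qed
  then show ?thesis by blast
qed

lemma Phi_decomp: "Phi_g g (Dg g x) n = x n + (w n - w (n - 1)) + r n"
proof -
  have I: "integral {2 powr of_int n..2 powr of_int (n+1)} F = x n * h n + w n * h (n+1) - w (n - 1) * h n"
  proof -
    have e1: "E n = w n * h (n+1)" using h_pos[of "n+1"] by (simp add: w_def)
    have e2: "E (n - 1) = w (n - 1) * h n" using h_pos[of n] by (simp add: w_def)
    have e3: "2 powr of_int n * v n = x n * h n" by (simp add: v_def h_def)
    show ?thesis using main_identity[of n] unfolding e1 e2 e3 by linarith
  qed
  have "Phi_g g (Dg g x) n = (x n * h n + w n * h (n+1) - w (n - 1) * h n) / h n"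
    unfolding Phi_g_def F_def[symmetric] f_def[symmetric] I by (simp add: h_def)
  also have "\<dots> = x n + (w n - w (n - 1)) + r n"
    using h_pos[of n] by (simp add: r_def field_simps)
  finally show ?thesis .
qed

end

lemma linf_bound: "z \<in> linf \<longleftrightarrow> (\<exists>B. \<forall>n. norm (z n) \<le> B)"
  unfolding linf_def bounded_iff by auto

lemma linf_add: "a \<in> linf \<Longrightarrow> b \<in> linf \<Longrightarrow> (\<lambda>n. a n + b n) \<in> linf"
  unfolding linf_bound by (meson add_mono norm_triangle_ineq order_trans)

lemma linf_scale: "a \<in> linf \<Longrightarrow> (\<lambda>n. c * a n) \<in> linf"
proof -
  assume "a \<in> linf"
  then obtain B where B: "\<And>n. norm (a n) \<le> B" by (auto simp: linf_bound)
  have "norm (c * a n) \<le> norm c * B" for n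
    using B[of n] by (simp add: norm_mult mult_left_mono)
  then show ?thesis by (auto simp: linf_bound)
qed

lemma linf_shift: "a \<in> linf \<Longrightarrow> shift_plus a \<in> linf"
  unfolding linf_bound shift_plus_def by blast

lemma theta_zero_fun: "cont_lin_functional \<theta> \<Longrightarrow> \<theta> (\<lambda>n. 0) = 0"
proof -
  assume "cont_lin_functional \<theta>"
  then have sc: "\<And>c a. a \<in> linf \<Longrightarrow> \<theta> (\<lambda>n. c * a n) = c * \<theta> a"
    unfolding cont_lin_functional_def by blast
  have "\<theta> (\<lambda>n. 0 * (\<lambda>n. 0::complex) n) = 0 * \<theta> (\<lambda>n. 0)" by (rule sc) (auto simp: linf_bound)
  then show ?thesis by simp
qed

lemma theta_small:
  assumes cl: "cont_lin_functional \<theta>" and e: "0 < e"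
  obtains d where "0 < d" "\<And>y. y \<in> linf \<Longrightarrow> (\<forall>n. norm (y n) \<le> d) \<Longrightarrow> norm (\<theta> y) < e"
proof -
  have z: "(\<lambda>n::int. 0::complex) \<in> linf" by (auto simp: linf_bound)
  have "\<forall>e>0. \<exists>d>0. \<forall>y\<in>linf. supnorm (\<lambda>n. y n - 0) < d \<longrightarrow> norm (\<theta> y - \<theta> (\<lambda>n. 0)) < e"
    using cl z unfolding cont_lin_functional_def by fastforce
  then obtain d where d: "d > 0"
    "\<And>y. y \<in> linf \<Longrightarrow> supnorm (\<lambda>n. y n - 0) < d \<Longrightarrow> norm (\<theta> y - \<theta> (\<lambda>n. 0)) < e"
    using e by blast
  show ?thesis
  proof (rule that[of "d/2"])
    show "0 < d / 2" using d by simp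
    fix y assume y: "y \<in> linf" "\<forall>n. norm (y n) \<le> d / 2"
    have "supnorm (\<lambda>n. y n - 0) \<le> d / 2" unfolding supnorm_def
      by (rule cSUP_least) (use y(2) in auto)
    then have "supnorm (\<lambda>n. y n - 0) < d" using d by linarith
    then show "norm (\<theta> y) < e" using d(2)[OF y(1)] theta_zero_fun[OF cl] by simp
  qed
qed

lemma theta_zero_pinf:
  assumes cl: "cont_lin_functional \<theta>" and sp: "supported_pinf \<theta>" and z: "z \<in> linf"
    and lim: "\<And>\<epsilon>. \<epsilon> > 0 \<Longrightarrow> \<exists>a. \<forall>n\<ge>a. norm (z n) \<le> \<epsilon>"
  shows "\<theta> z = 0"
proof (rule ccontr)
  assume ne: "\<theta> z \<noteq> 0"
  define e where "e = norm (\<theta> z)"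
  have e: "0 < e" using ne by (simp add: e_def)
  obtain d where d: "0 < d" "\<And>y. y \<in> linf \<Longrightarrow> (\<forall>n. norm (y n) \<le> d) \<Longrightarrow> norm (\<theta> y) < e"
    using theta_small[OF cl e] by blast
  obtain a where a: "\<forall>n\<ge>a. norm (z n) \<le> d" using lim[OF d(1)] by blast
  define z1 where "z1 = (\<lambda>n. if n < a then z n else 0)"
  define z2 where "z2 = (\<lambda>n. if n < a then 0 else z n)"
  have z1l: "z1 \<in> linf"
  proof -
    obtain B where B: "\<And>n. norm (z n) \<le> B" using z by (auto simp: linf_bound)
    have B0: "0 \<le> B" using B[of 0] norm_ge_zero[of "z 0"] by linarith
    have "norm (z1 n) \<le> B" for n using B[of n] B0 by (simp add: z1_def)
    then show ?thesis by (auto simp: linf_bound)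
  qed
  have z2l: "z2 \<in> linf"
  proof -
    obtain B where B: "\<And>n. norm (z n) \<le> B" using z by (auto simp: linf_bound)
    have B0: "0 \<le> B" using B[of 0] norm_ge_zero[of "z 0"] by linarith
    have "norm (z2 n) \<le> B" for n using B[of n] B0 by (simp add: z2_def)
    then show ?thesis by (auto simp: linf_bound)
  qed
  have "z = (\<lambda>n. z1 n + z2 n)" by (auto simp: z1_def z2_def)
  moreover have "\<theta> (\<lambda>n. z1 n + z2 n) = \<theta> z1 + \<theta> z2" using cl z1l z2l unfolding cont_lin_functional_def by blast
  ultimately have "\<theta> z = \<theta> z1 + \<theta> z2" by simp
  moreover have "\<theta> z1 = 0" using sp z unfolding supported_pinf_def z1_def by blast
  moreover have "\<forall>n. norm (z2 n) \<le> d" using a d(1) by (auto simp: z2_def)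
  then have "norm (\<theta> z2) < e" by (rule d(2)[OF z2l])
  ultimately show False by (simp add: e_def)
qed

lemma theta_zero_minf:
  assumes cl: "cont_lin_functional \<theta>" and sp: "supported_minf \<theta>" and z: "z \<in> linf"
    and lim: "\<And>\<epsilon>. \<epsilon> > 0 \<Longrightarrow> \<exists>a. \<forall>n\<le>a. norm (z n) \<le> \<epsilon>"
  shows "\<theta> z = 0"
proof (rule ccontr)
  assume ne: "\<theta> z \<noteq> 0"
  define e where "e = norm (\<theta> z)"
  have e: "0 < e" using ne by (simp add: e_def)
  obtain d where d: "0 < d" "\<And>y. y \<in> linf \<Longrightarrow> (\<forall>n. norm (y n) \<le> d) \<Longrightarrow> norm (\<theta> y) < e"
    using theta_small[OF cl e] by blast
  obtain a where a: "\<forall>n\<le>a. norm (z n) \<le> d" using lim[OF d(1)] by blast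
  define z1 where "z1 = (\<lambda>n. if a < n then z n else 0)"
  define z2 where "z2 = (\<lambda>n. if a < n then 0 else z n)"
  have z1l: "z1 \<in> linf"
  proof -
    obtain B where B: "\<And>n. norm (z n) \<le> B" using z by (auto simp: linf_bound)
    have B0: "0 \<le> B" using B[of 0] norm_ge_zero[of "z 0"] by linarith
    have "norm (z1 n) \<le> B" for n using B[of n] B0 by (simp add: z1_def)
    then show ?thesis by (auto simp: linf_bound)
  qed
  have z2l: "z2 \<in> linf"
  proof -
    obtain B where B: "\<And>n. norm (z n) \<le> B" using z by (auto simp: linf_bound)
    have B0: "0 \<le> B" using B[of 0] norm_ge_zero[of "z 0"] by linarith
    have "norm (z2 n) \<le> B" for n using B[of n] B0 by (simp add: z2_def)
    then show ?thesis by (auto simp: linf_bound)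
  qed
  have "z = (\<lambda>n. z1 n + z2 n)" by (auto simp: z1_def z2_def)
  moreover have "\<theta> (\<lambda>n. z1 n + z2 n) = \<theta> z1 + \<theta> z2" using cl z1l z2l unfolding cont_lin_functional_def by blast
  ultimately have "\<theta> z = \<theta> z1 + \<theta> z2" by simp
  moreover have "\<theta> z1 = 0" using sp z unfolding supported_minf_def z1_def by blast
  moreover have "\<forall>n. norm (z2 n) \<le> d" using a d(1) by (auto simp: z2_def)
  then have "norm (\<theta> z2) < e" by (rule d(2)[OF z2l])
  ultimately show False by (simp add: e_def)
qed

lemma theta_decomp:
  assumes cl: "cont_lin_functional \<theta>" and si: "shift_invariant \<theta>"
    and X: "X \<in> linf" and W: "W \<in> linf" and R: "R \<in> linf"
  shows "\<theta> (\<lambda>n. X n + (W n - W (n - 1)) + R n) = \<theta> X + \<theta> R"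
proof -
  have add: "\<And>a b. a \<in> linf \<Longrightarrow> b \<in> linf \<Longrightarrow> \<theta> (\<lambda>n. a n + b n) = \<theta> a + \<theta> b"
    and sc: "\<And>c a. a \<in> linf \<Longrightarrow> \<theta> (\<lambda>n. c * a n) = c * \<theta> a"
    using cl unfolding cont_lin_functional_def by blast+
  have SW: "shift_plus W \<in> linf" using W by (rule linf_shift)
  have mSW: "(\<lambda>n. (-1) * shift_plus W n) \<in> linf" using SW by (rule linf_scale)
  have XW: "(\<lambda>n. X n + W n) \<in> linf" using X W by (rule linf_add)
  have SR: "(\<lambda>n. (-1) * shift_plus W n + R n) \<in> linf" using mSW R by (rule linf_add)
  have eq: "(\<lambda>n. X n + (W n - W (n - 1)) + R n) = (\<lambda>n. (X n + W n) + ((-1) * shift_plus W n + R n))"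
    by (auto simp: shift_plus_def)
  have "\<theta> (\<lambda>n. X n + (W n - W (n - 1)) + R n) = \<theta> (\<lambda>n. X n + W n) + \<theta> (\<lambda>n. (-1) * shift_plus W n + R n)"
    unfolding eq using add[OF XW SR] by simp
  also have "\<dots> = \<theta> X + \<theta> W + ((-1) * \<theta> (shift_plus W) + \<theta> R)"
    using add[OF X W] add[OF mSW R] sc[OF SW, of "-1"] by simp
  also have "\<theta> (shift_plus W) = \<theta> W" using si W unfolding shift_invariant_def by blast
  finally show ?thesis by simp
qed

lemma linf_real: "(\<And>n. \<bar>a n\<bar> \<le> B) \<Longrightarrow> (\<lambda>n. complex_of_real (a n)) \<in> linf"
  unfolding linf_bound by (intro exI[of _ B]) simp

lemma main_case:
  fixes g :: "real \<Rightarrow> real" and x :: "int \<Rightarrow> real"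
  assumes gpos: "\<forall>t>0. 0 < g t"
    and gdec: "\<forall>s t. 0 < s \<and> s \<le> t \<longrightarrow> g t \<le> g s"
    and glim: "(g \<longlongrightarrow> 0) at_top"
    and cl: "cont_lin_functional \<theta>" and si: "shift_invariant \<theta>"
    and bx: "bounded (range x)" and xnn: "\<forall>n. 0 \<le> x n"
    and Rzero: "\<And>M R. PG g x M \<Longrightarrow> R \<in> linf \<Longrightarrow> (\<forall>n. R n = complex_of_real (PG.r g x n)) \<Longrightarrow> \<theta> R = 0"
  shows "\<theta> (\<lambda>n. complex_of_real (x n)) = \<theta> (\<lambda>n. complex_of_real (Phi_g g (Dg g x) n))"
proof -
  obtain M where M: "\<And>n. \<bar>x n\<bar> \<le> M" using bx unfolding bounded_iff by auto
  interpret PG g x M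
    using gpos gdec glim xnn M by unfold_locales (auto simp: abs_le_iff)
  have X: "(\<lambda>n. complex_of_real (x n)) \<in> linf" using M by (rule linf_real)
  have W: "(\<lambda>n. complex_of_real (w n)) \<in> linf" using w_nn w_le by (intro linf_real[of _ M]) simp
  have R: "(\<lambda>n. complex_of_real (r n)) \<in> linf" using r_bound by (rule linf_real)
  have "\<theta> (\<lambda>n. complex_of_real (Phi_g g (Dg g x) n))
      = \<theta> (\<lambda>n. complex_of_real (x n) + (complex_of_real (w n) - complex_of_real (w (n - 1))) + complex_of_real (r n))"
    by (simp add: Phi_decomp)
  also have "\<dots> = \<theta> (\<lambda>n. complex_of_real (x n)) + \<theta> (\<lambda>n. complex_of_real (r n))"
    by (rule theta_decomp[OF cl si X W R])
  also have "\<theta> (\<lambda>n. complex_of_real (r n)) = 0"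
    by (rule Rzero[OF PG_axioms R]) simp
  finally show ?thesis by simp
qed

theorem proposition3p4:
  fixes g :: "real \<Rightarrow> real"
  assumes gpos: "\<forall>t>0. 0 < g t"
    and gdec: "\<forall>s t. 0 < s \<and> s \<le> t \<longrightarrow> g t \<le> g s"
    and glim: "(g \<longlongrightarrow> 0) at_top"
    and gbdd: "bdd_above ((\<lambda>t. g t / g (2 * t)) ` {0<..})"
  shows "(((\<lambda>t. g t / g (2 * t)) \<longlongrightarrow> 2) at_top \<longrightarrow>
            (\<forall>\<theta> x. cont_lin_functional \<theta> \<and> shift_invariant \<theta> \<and> supported_pinf \<theta> \<and>
               bounded (range x) \<and> (\<forall>n. 0 \<le> x n) \<longrightarrow>
               \<theta> (\<lambda>n. complex_of_real (x n)) = \<theta> (\<lambda>n. complex_of_real (Phi_g g (Dg g x) n))))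
       \<and> (((\<lambda>t. g t / g (2 * t)) \<longlongrightarrow> 2) (at_right 0) \<longrightarrow>
            (\<forall>\<theta> x. cont_lin_functional \<theta> \<and> shift_invariant \<theta> \<and> supported_minf \<theta> \<and>
               bounded (range x) \<and> (\<forall>n. 0 \<le> x n) \<longrightarrow>
               \<theta> (\<lambda>n. complex_of_real (x n)) = \<theta> (\<lambda>n. complex_of_real (Phi_g g (Dg g x) n))))"
proof (intro conjI impI allI)
  fix \<theta> and x :: "int \<Rightarrow> real"
  assume lim: "((\<lambda>t. g t / g (2 * t)) \<longlongrightarrow> 2) at_top"
    and H: "cont_lin_functional \<theta> \<and> shift_invariant \<theta> \<and> supported_pinf \<theta> \<and> bounded (range x) \<and> (\<forall>n. 0 \<le> x n)"
  show "\<theta> (\<lambda>n. complex_of_real (x n)) = \<theta> (\<lambda>n. complex_of_real (Phi_g g (Dg g x) n))"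
  proof (rule main_case[OF gpos gdec glim])
    fix M R assume pg: "PG g x M" and R: "R \<in> linf" and Req: "\<forall>n. R n = complex_of_real (PG.r g x n)"
    show "\<theta> R = 0"
    proof (rule theta_zero_pinf[OF _ _ R])
      fix \<epsilon> :: real assume "\<epsilon> > 0"
      then show "\<exists>a. \<forall>n\<ge>a. norm (R n) \<le> \<epsilon>" using PG.r_lim_top[OF pg lim] Req by simp
    qed (use H in auto)
  qed (use H in auto)
next
  fix \<theta> and x :: "int \<Rightarrow> real"
  assume lim: "((\<lambda>t. g t / g (2 * t)) \<longlongrightarrow> 2) (at_right 0)"
    and H: "cont_lin_functional \<theta> \<and> shift_invariant \<theta> \<and> supported_minf \<theta> \<and> bounded (range x) \<and> (\<forall>n. 0 \<le> x n)"
  show "\<theta> (\<lambda>n. complex_of_real (x n)) = \<theta> (\<lambda>n. complex_of_real (Phi_g g (Dg g x) n))"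
  proof (rule main_case[OF gpos gdec glim])
    fix M R assume pg: "PG g x M" and R: "R \<in> linf" and Req: "\<forall>n. R n = complex_of_real (PG.r g x n)"
    show "\<theta> R = 0"
    proof (rule theta_zero_minf[OF _ _ R])
      fix \<epsilon> :: real assume "\<epsilon> > 0"
      then show "\<exists>a. \<forall>n\<le>a. norm (R n) \<le> \<epsilon>" using PG.r_lim_zero[OF pg lim] Req by simp
    qed (use H in auto)
  qed (use H in auto)
qed

end
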